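(* Let $N$ be an NFA with vertex set $V$, let $L_0$ be a backward-admissible initial partition of $V$, and let $\sim$ be an equivalence relation on $V$ refining $\sim_{\mathrm{bwd}(L_0)}$. Let $\bar N$ be the NFA obtained by grouping $N$ by $\sim$. Then $\bar N$ has a conflict if and only if $N$ has a conflict.
   Context: An NFA $N$ over a finite alphabet $A$, with action set $T$ and a relation $\mathrm{conf}\subseteq T\times T$, consists of a finite vertex set $V$, a starting vertex $v_s\in V$, an accepting action set $T_v\subseteq T$ for each $v\in V$, and a set of labeled edges $v\xrightarrow{\lambda}w$ with $v,w\in V$ and $\lambda\in A\cup\{\varepsilon\}$. For $U,W\subseteq T$, $\mathrm{conf}(U,W)$ means $\mathrm{conf}(a,b)$ for some $a\in U,b\in W$. For a vertex $u$ and a finite sequence $\tau=\tau_1\cdots\tau_r$ ($r\ge0$) with $\tau_i\in A\cup\{\varepsilon\}$, a vertex $w$ is reachable from $u$ on $\tau$ if there are vertices $u=v_1,\dots,v_{r+1}=w$ with an edge $v_i\xrightarrow{\tau_i}v_{i+1}$ for each $i$; $w$ is reachable from $u$ on a string $\zeta\in A^*$ if it is reachable on some sequence whose concatenation (reading $\varepsilon$ as the empty string) equals $\zeta$. A conflict in $N$ consists of two (not necessarily distinct) vertices $w,w'$ both reachable from $v_s$ on the same string $\zeta\in A^*$ with $\mathrm{conf}(T_w,T_{w'})$. Given an equivalence relation $\sim$ on $V$, the grouped NFA $\bar N$ has as vertices the equivalence classes, starting vertex the class of $v_s$, action sets $T_{\bar v}=\bigcup_{v\in\bar v}T_v$, and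 an edge $\bar v\xrightarrow{\lambda}\bar w$ iff some $v\in\bar v$, $w\in\bar w$ have an edge $v\xrightarrow{\lambda}w$ in $N$. For a partition $L_0$ of $V$ write $[v]_{L_0}$ for the set of $L_0$ containing $v$; $L_0$ is a backward-admissible initial partition if for all vertices $v_1,v_2$ with $\mathrm{conf}(T_{v_1},T_{v_2})$ and all $v_1'\in[v_1]_{L_0}$, $v_2'\in[v_2]_{L_0}$ that are reachable from $v_s$ on a common string, we have $\mathrm{conf}(T_{v_1'},T_{v_2'})$. Vertices $v_1,v_2$ are backward-equivalent with respect to $L_0$, $v_1\sim_{\mathrm{bwd}(L_0)}v_2$, if for every $Z\in L_0$ and every finite sequence $\tau$ over $A\cup\{\varepsilon\}$, some element of $Z$ is reachable from $v_1$ on $\tau$ iff some element of $Z$ is reachable from $v_2$ on $\tau$. *)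

theory Defs
  imports Main "HOL-Library.Disjoint_Sets"
begin

text \<open>Labels: None stands for epsilon, Some a for a letter a of the alphabet.
  Edges are triples (v, lambda, w).\<close>

fun reach_seq :: "('v \<times> 'a option \<times> 'v) set \<Rightarrow> 'v \<Rightarrow> 'a option list \<Rightarrow> 'v \<Rightarrow> bool" where
  "reach_seq E u [] w = (u = w)"
| "reach_seq E u (l # \<tau>) w = (\<exists>v. (u, l, v) \<in> E \<and> reach_seq E v \<tau> w)"

definition word_of :: "'a option list \<Rightarrow> 'a list" where
  "word_of \<tau> = concat (map (\<lambda>x. case x of None \<Rightarrow> [] | Some a \<Rightarrow> [a]) \<tau>)"

definition reach_str :: "('v \<times> 'a option \<times> 'v) set \<Rightarrow> 'v \<Rightarrow> 'a list \<Rightarrow> 'v \<Rightarrow> bool" where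
  "reach_str E u \<zeta> w = (\<exists>\<tau>. reach_seq E u \<tau> w \<and> word_of \<tau> = \<zeta>)"

definition conf_sets :: "('t \<times> 't) set \<Rightarrow> 't set \<Rightarrow> 't set \<Rightarrow> bool" where
  "conf_sets conf U W = (\<exists>a\<in>U. \<exists>b\<in>W. (a, b) \<in> conf)"

definition is_nfa :: "'a set \<Rightarrow> 't set \<Rightarrow> ('t \<times> 't) set \<Rightarrow> 'v set \<Rightarrow> 'v \<Rightarrow> ('v \<Rightarrow> 't set)
    \<Rightarrow> ('v \<times> 'a option \<times> 'v) set \<Rightarrow> bool" where
  "is_nfa A T conf V vs Tv E \<longleftrightarrow> finite A \<and> conf \<subseteq> T \<times> T \<and> finite V \<and> vs \<in> V
     \<and> (\<forall>v\<in>V. Tv v \<subseteq> T) \<and> E \<subseteq> V \<times> (insert None (Some ` A)) \<times> V"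

definition has_conflict :: "('t \<times> 't) set \<Rightarrow> 'v \<Rightarrow> ('v \<Rightarrow> 't set)
    \<Rightarrow> ('v \<times> 'a option \<times> 'v) set \<Rightarrow> bool" where
  "has_conflict conf vs Tv E \<longleftrightarrow>
     (\<exists>w w' \<zeta>. reach_str E vs \<zeta> w \<and> reach_str E vs \<zeta> w' \<and> conf_sets conf (Tv w) (Tv w'))"

definition grp_start :: "('v \<times> 'v) set \<Rightarrow> 'v \<Rightarrow> 'v set" where
  "grp_start R vs = R `` {vs}"

definition grp_acc :: "('v \<Rightarrow> 't set) \<Rightarrow> 'v set \<Rightarrow> 't set" where
  "grp_acc Tv X = (\<Union>v\<in>X. Tv v)"

definition grp_edges :: "'v set \<Rightarrow> ('v \<times> 'v) set \<Rightarrow> ('v \<times> 'a option \<times> 'v) set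
    \<Rightarrow> ('v set \<times> 'a option \<times> 'v set) set" where
  "grp_edges V R E = {(X, l, Y). X \<in> V // R \<and> Y \<in> V // R \<and> (\<exists>v\<in>X. \<exists>w\<in>Y. (v, l, w) \<in> E)}"

definition bwd_admissible :: "('t \<times> 't) set \<Rightarrow> 'v set \<Rightarrow> 'v \<Rightarrow> ('v \<Rightarrow> 't set)
    \<Rightarrow> ('v \<times> 'a option \<times> 'v) set \<Rightarrow> 'v set set \<Rightarrow> bool" where
  "bwd_admissible conf V vs Tv E L0 \<longleftrightarrow> partition_on V L0 \<and>
     (\<forall>Z1\<in>L0. \<forall>Z2\<in>L0. \<forall>v1\<in>Z1. \<forall>v2\<in>Z2. \<forall>v1'\<in>Z1. \<forall>v2'\<in>Z2.
        conf_sets conf (Tv v1) (Tv v2) \<and> (\<exists>\<zeta>. reach_str E vs \<zeta> v1' \<and> reach_str E vs \<zeta> v2')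
        \<longrightarrow> conf_sets conf (Tv v1') (Tv v2'))"

definition bwd_equiv :: "'a set \<Rightarrow> ('v \<times> 'a option \<times> 'v) set \<Rightarrow> 'v set set \<Rightarrow> 'v \<Rightarrow> 'v \<Rightarrow> bool" where
  "bwd_equiv A E L0 v1 v2 \<longleftrightarrow>
     (\<forall>Z\<in>L0. \<forall>\<tau>. set \<tau> \<subseteq> insert None (Some ` A) \<longrightarrow>
        ((\<exists>w\<in>Z. reach_seq E v1 \<tau> w) \<longleftrightarrow> (\<exists>w\<in>Z. reach_seq E v2 \<tau> w)))"

end

theory Submission
  imports Defs
begin

lemma grp_labels:
  assumes "E \<subseteq> V \<times> L \<times> V"
  shows "reach_seq (grp_edges V R E) X \<tau> Y \<Longrightarrow> set \<tau> \<subseteq> L"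
proof (induction \<tau> arbitrary: X)
  case Nil then show ?case by simp
next
  case (Cons l \<tau>)
  then obtain X' where e: "(X, l, X') \<in> grp_edges V R E" and r: "reach_seq (grp_edges V R E) X' \<tau> Y" by auto
  from e assms have "l \<in> L" unfolding grp_edges_def by auto
  with Cons.IH[OF r] show ?case by simp
qed

lemma lift_path:
  assumes eq: "equiv V R" and EV: "E \<subseteq> V \<times> L \<times> V"
  shows "reach_seq E u \<tau> w \<Longrightarrow> u \<in> V \<Longrightarrow> reach_seq (grp_edges V R E) (R``{u}) \<tau> (R``{w})"
proof (induction \<tau> arbitrary: u)
  case Nil then show ?case by simp
next
  case (Cons l \<tau>)
  then obtain v where e: "(u, l, v) \<in> E" and r: "reach_seq E v \<tau> w" by auto
  have vV: "v \<in> V" using e EV by auto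
  have "(R``{u}, l, R``{v}) \<in> grp_edges V R E"
  proof -
    have "u \<in> R``{u}" "v \<in> R``{v}" using Cons.prems vV eq by (auto simp: equiv_def refl_on_def)
    moreover have "R``{u} \<in> V // R" "R``{v} \<in> V // R" using Cons.prems vV by (auto intro: quotientI)
    ultimately show ?thesis unfolding grp_edges_def using e by blast
  qed
  with Cons.IH[OF r vV] show ?case by auto
qed

lemma back_path:
  assumes eq: "equiv V R" and EV: "E \<subseteq> V \<times> (insert None (Some ` A)) \<times> V"
    and bw: "\<forall>v1 v2. (v1, v2) \<in> R \<longrightarrow> bwd_equiv A E L0 v1 v2"
  shows "reach_seq (grp_edges V R E) X \<tau> Y \<Longrightarrow> X \<in> V // R \<Longrightarrow> y \<in> Y \<Longrightarrow> Z \<in> L0 \<Longrightarrow> y \<in> Z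
     \<Longrightarrow> x \<in> X \<Longrightarrow> \<exists>w\<in>Z. reach_seq E x \<tau> w"
proof (induction \<tau> arbitrary: X x)
  case Nil
  then have "(y, x) \<in> R" using in_quotient_imp_in_rel[OF eq, of X y x] by auto
  with bw have "bwd_equiv A E L0 y x" by auto
  then have "(\<exists>w\<in>Z. reach_seq E y [] w) \<longleftrightarrow> (\<exists>w\<in>Z. reach_seq E x [] w)"
    using Nil(4,5) unfolding bwd_equiv_def
    apply (elim ballE[of _ _ Z]) apply (elim allE[of _ "[]"]) by simp_all
  then show ?case using Nil by auto
next
  case (Cons l \<tau>)
  then obtain X' where e: "(X, l, X') \<in> grp_edges V R E" and r: "reach_seq (grp_edges V R E) X' \<tau> Y" by auto
  from e obtain v w where X': "X' \<in> V // R" and v: "v \<in> X" and w: "w \<in> X'" and vw: "(v, l, w) \<in> E"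
    unfolding grp_edges_def by auto
  from Cons.IH[OF r X' Cons.prems(3,4,5) w] obtain z where "z \<in> Z" "reach_seq E w \<tau> z" by auto
  with vw have vr: "\<exists>z\<in>Z. reach_seq E v (l # \<tau>) z" by auto
  have "(v, x) \<in> R" using in_quotient_imp_in_rel[OF eq Cons.prems(2), of v x] v Cons.prems by auto
  with bw have be: "bwd_equiv A E L0 v x" by auto
  have "set (l # \<tau>) \<subseteq> insert None (Some ` A)"
    using grp_labels[OF EV r] vw EV by auto
  with be Cons.prems(4) vr show ?case unfolding bwd_equiv_def by blast
qed

theorem mainTheorem9:
  fixes A :: "'a set" and T :: "'t set" and conf :: "('t \<times> 't) set"
    and V :: "'v set" and vs :: 'v and Tv :: "'v \<Rightarrow> 't set"
    and E :: "('v \<times> 'a option \<times> 'v) set"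
    and L0 :: "'v set set" and R :: "('v \<times> 'v) set"
  assumes "is_nfa A T conf V vs Tv E"
    and "bwd_admissible conf V vs Tv E L0"
    and "equiv V R"
    and "\<forall>v1 v2. (v1, v2) \<in> R \<longrightarrow> bwd_equiv A E L0 v1 v2"
  shows "has_conflict conf (grp_start R vs) (grp_acc Tv) (grp_edges V R E)
         \<longleftrightarrow> has_conflict conf vs Tv E"
proof
  have EV: "E \<subseteq> V \<times> (insert None (Some ` A)) \<times> V" and vsV: "vs \<in> V"
    using assms(1) unfolding is_nfa_def by auto
  have part: "partition_on V L0" using assms(2) unfolding bwd_admissible_def by auto
  have startQ: "R``{vs} \<in> V // R" using vsV by (rule quotientI)
  have vsin: "vs \<in> R``{vs}" using assms(3) vsV by (auto simp: equiv_def refl_on_def)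
  have endQ: "reach_seq (grp_edges V R E) X \<tau> Y \<Longrightarrow> X \<in> V // R \<Longrightarrow> Y \<in> V // R" for X \<tau> Y
  proof (induction \<tau> arbitrary: X)
    case Nil then show ?case by simp
  next
    case (Cons l \<tau>)
    then obtain X' where e: "(X, l, X') \<in> grp_edges V R E" and r: "reach_seq (grp_edges V R E) X' \<tau> Y" by auto
    from e have "X' \<in> V // R" unfolding grp_edges_def by auto
    with Cons.IH[OF r] show ?case by simp
  qed
  have key: "reach_str (grp_edges V R E) (R``{vs}) \<zeta> Y \<Longrightarrow> y \<in> Y \<Longrightarrow>
     \<exists>Z\<in>L0. y \<in> Z \<and> y \<in> V \<and> (\<exists>y'\<in>Z. reach_str E vs \<zeta> y')" for \<zeta> Y y
  proof -
    assume a: "reach_str (grp_edges V R E) (R``{vs}) \<zeta> Y" and y: "y \<in> Y"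
    then obtain \<tau> where t: "reach_seq (grp_edges V R E) (R``{vs}) \<tau> Y" "word_of \<tau> = \<zeta>"
      unfolding reach_str_def by auto
    have "Y \<in> V // R" using endQ[OF t(1) startQ] .
    then have yV: "y \<in> V" using y assms(3) by (meson in_quotient_imp_subset subsetD)
    then obtain Z where Z: "Z \<in> L0" "y \<in> Z" using part unfolding partition_on_def by blast
    from back_path[OF assms(3) EV assms(4) t(1) startQ y Z(1) Z(2) vsin] t(2)
    show ?thesis using Z yV unfolding reach_str_def by blast
  qed
  assume "has_conflict conf (grp_start R vs) (grp_acc Tv) (grp_edges V R E)"
  then obtain X X' \<zeta> where r1: "reach_str (grp_edges V R E) (R``{vs}) \<zeta> X"
    and r2: "reach_str (grp_edges V R E) (R``{vs}) \<zeta> X'"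
    and c: "conf_sets conf (grp_acc Tv X) (grp_acc Tv X')"
    unfolding has_conflict_def grp_start_def by auto
  from c obtain v1 v2 where v1: "v1 \<in> X" and v2: "v2 \<in> X'" and c2: "conf_sets conf (Tv v1) (Tv v2)"
    unfolding conf_sets_def grp_acc_def by auto
  from key[OF r1 v1] obtain Z1 v1' where "Z1 \<in> L0" "v1 \<in> Z1" "v1' \<in> Z1" "reach_str E vs \<zeta> v1'" by auto
  moreover from key[OF r2 v2] obtain Z2 v2' where "Z2 \<in> L0" "v2 \<in> Z2" "v2' \<in> Z2" "reach_str E vs \<zeta> v2'" by auto
  ultimately have "conf_sets conf (Tv v1') (Tv v2')"
    using assms(2) c2 unfolding bwd_admissible_def by blast
  then show "has_conflict conf vs Tv E" unfolding has_conflict_def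
    using \<open>reach_str E vs \<zeta> v1'\<close> \<open>reach_str E vs \<zeta> v2'\<close> by blast
next
  have EV: "E \<subseteq> V \<times> (insert None (Some ` A)) \<times> V" and vsV: "vs \<in> V"
    using assms(1) unfolding is_nfa_def by auto
  have lift: "reach_str E vs \<zeta> w \<Longrightarrow> reach_str (grp_edges V R E) (R``{vs}) \<zeta> (R``{w}) \<and> w \<in> V" for \<zeta> w
  proof -
    assume "reach_str E vs \<zeta> w"
    then obtain \<tau> where t: "reach_seq E vs \<tau> w" "word_of \<tau> = \<zeta>" unfolding reach_str_def by auto
    have "w \<in> V" using t(1) vsV
    proof (induction \<tau> arbitrary: vs)
      case Nil then show ?case by simp
    next
      case (Cons l \<tau>) then show ?case using EV by auto
    qed
    with lift_path[OF assms(3) EV t(1) vsV] t(2) show ?thesis unfolding reach_str_def by auto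
  qed
  assume "has_conflict conf vs Tv E"
  then obtain w w' \<zeta> where r1: "reach_str E vs \<zeta> w" and r2: "reach_str E vs \<zeta> w'"
    and c: "conf_sets conf (Tv w) (Tv w')" unfolding has_conflict_def by auto
  from lift[OF r1] lift[OF r2] have l: "reach_str (grp_edges V R E) (R``{vs}) \<zeta> (R``{w})"
    "reach_str (grp_edges V R E) (R``{vs}) \<zeta> (R``{w'})" "w \<in> V" "w' \<in> V" by auto
  have "w \<in> R``{w}" "w' \<in> R``{w'}" using l(3,4) assms(3) by (auto simp: equiv_def refl_on_def)
  then have "conf_sets conf (grp_acc Tv (R``{w})) (grp_acc Tv (R``{w'}))"
    using c unfolding conf_sets_def grp_acc_def by blast
  then show "has_conflict conf (grp_start R vs) (grp_acc Tv) (grp_edges V R E)"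
    unfolding has_conflict_def grp_start_def using l(1,2) by blast
qed

end
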